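(* Consider an $n$-player game with strategy sets $\mathcal{X}_i$ (nonempty convex compact), differentiable utilities $u_i:\mathcal{X}\to\mathbb{R}$ on $\mathcal{X}=\prod_i\mathcal{X}_i$, and operator $F=(F_1,\dots,F_n)$ with $F_i(x)=-\nabla_{x_i}u_i(x)$. Assume, writing $\mathcal{X}=\prod_{r=1}^d\mathcal{Z}_r$, that $F$ is $L$-Lipschitz and the average $(\alpha,\ell,h)$-generalized Minty property holds. Then for any $\epsilon>0$, after $T=O(1/\epsilon^2)$ iterations of rescaled optimistic gradient descent (with the learning rate $\eta\le\frac14\sqrt{\ell/(h^3L^2+hB_F^2\alpha^2d)}$, the constant in $O(\cdot)$ depending only on the problem parameters), one obtains a point $x\in\mathcal{X}$ such that: (1) if for each player $i$ the function $u_i(\cdot,x_{-i})$ is $L$-smooth, then for every $i$ and every $x_i^\star\in\mathcal{X}_i$ with $\|x_i^\star-x_i\|_2\le\delta$, $u_i(x)-u_i(x_i^\star,x_{-i})\ge-\epsilon-\frac L2\delta^2$; (2) if each $u_i$ is gradient dominant, then for every $i$ and every $x_i^\star\in\mathcal{X}_i$, $u_i(x)-u_i(x_i^\star,x_{-i})\ge-\epsilon$.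
   Context: $B_F:=\max_r\sup_x\|F_r(x)\|_2$ where $F_r$ is the component of $F$ on $\mathcal{Z}_r$. $\mathbf{1}_{\mathcal{Z}_r}$ is the indicator vector of the coordinates of $\mathcal{Z}_r$; $\circ$ is the coordinatewise product; vector inequalities are coordinatewise. $A(x)=\sum_r a_r(x)\mathbf{1}_{\mathcal{Z}_r}$ with each $a_r$ $\alpha$-Lipschitz and $0<\ell\le A(x)\le h$; $W(x)=\sum_r w_r(x)\mathbf{1}_{\mathcal{Z}_r}$ with $0<\ell\le W(x)\le h$. Average $(\alpha,\ell,h)$-generalized Minty property: for every $T$ and sequence $(x^{(t)})_{t\le T}$ in $\mathcal{X}$ there is $x^\star\in\mathcal{X}$ with $\sum_{t=1}^T\langle x^{(t)}-x^\star,F(x^{(t)})\circ A(x^{(t)})\circ W(x^\star)\rangle\ge0$. Rescaled optimistic gradient descent: from arbitrary $x^{(0)}=\hat x^{(1)}$, $x^{(t)}=\Pi_{\mathcal{X}}(\hat x^{(t)}-\eta A(x^{(t-1)})\circ F(x^{(t-1)}))$, $\hat x^{(t+1)}=\Pi_{\mathcal{X}}(\hat x^{(t)}-\eta A(x^{(t)})\circ F(x^{(t)}))$. Gradient dominance (per player, with parameter $G>0$): $u_i(x)-\max_{x_i^\star\in\mathcal{X}_i}u_i(x_i^\star,x_{-i})\ge G\min_{x_i^\star\in\mathcal{X}_i}\langle x_i-x_i^\star,\nabla_{x_i}u_i(x)\rangle$ for all $x\in\mathcal{X}$. *)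

theory Defs
  imports "HOL-Analysis.Analysis"
begin

text \<open>A partition of the coordinates is given by
  a labelling g :: 'k => 'c (players, or the blocks Z_r).\<close>

text \<open>Restriction of a vector to the coordinates of class c (other coordinates set to 0);
  this is the component of the vector on that block.\<close>
definition restr :: "('k \<Rightarrow> 'c) \<Rightarrow> 'c \<Rightarrow> real^'k \<Rightarrow> real^'k" where
  "restr g c x = (\<chi> k. if g k = c then x $ k else 0)"

definition supported_on :: "('k \<Rightarrow> 'c) \<Rightarrow> 'c \<Rightarrow> (real^'k) set" where
  "supported_on g c = {v. \<forall>k. g k \<noteq> c \<longrightarrow> v $ k = 0}"

definition prod_set :: "('k \<Rightarrow> 'c) \<Rightarrow> ('c \<Rightarrow> (real^'k) set) \<Rightarrow> (real^'k) set" where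
  "prod_set g S = {x. \<forall>c. restr g c x \<in> S c}"

definition upd :: "('k \<Rightarrow> 'c) \<Rightarrow> 'c \<Rightarrow> real^'k \<Rightarrow> real^'k \<Rightarrow> real^'k" where
  "upd g c x y = (\<chi> k. if g k = c then y $ k else x $ k)"

text \<open>Full gradient of a real function on real^'k (meaningful where it is differentiable).\<close>
definition grad :: "(real^'k \<Rightarrow> real) \<Rightarrow> real^'k \<Rightarrow> real^'k" where
  "grad f x = (\<chi> k. frechet_derivative f (at x) (axis k 1))"

definition game_op :: "('k \<Rightarrow> 'p) \<Rightarrow> ('p \<Rightarrow> real^'k \<Rightarrow> real) \<Rightarrow> real^'k \<Rightarrow> real^'k" where
  "game_op pl u x = (\<chi> k. - (grad (u (pl k)) x $ k))"

definition blockvec :: "('k \<Rightarrow> 'r) \<Rightarrow> ('r \<Rightarrow> real^'k \<Rightarrow> real) \<Rightarrow> real^'k \<Rightarrow> real^'k" where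
  "blockvec blk a x = (\<chi> k. a (blk k) x)"

definition cmul :: "real^'k \<Rightarrow> real^'k \<Rightarrow> real^'k" where
  "cmul v w = (\<chi> k. v $ k * w $ k)"

definition proj :: "(real^'k) set \<Rightarrow> real^'k \<Rightarrow> real^'k" where
  "proj X y = closest_point X y"

definition BF :: "('k \<Rightarrow> 'r) \<Rightarrow> (real^'k) set \<Rightarrow> (real^'k \<Rightarrow> real^'k) \<Rightarrow> real" where
  "BF blk X F = Sup {norm (restr blk r (F x)) | r x. x \<in> X}"

text \<open>Average (alpha,l,h)-generalized Minty property (the Lipschitz/bounds requirements
  on A and W are stated separately).\<close>
definition avg_minty :: "(real^'k) set \<Rightarrow> (real^'k \<Rightarrow> real^'k) \<Rightarrow> (real^'k \<Rightarrow> real^'k)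
    \<Rightarrow> (real^'k \<Rightarrow> real^'k) \<Rightarrow> bool" where
  "avg_minty X F A W \<longleftrightarrow>
     (\<forall>(T::nat) (xs::nat \<Rightarrow> real^'k). (\<forall>t\<in>{1..T}. xs t \<in> X) \<longrightarrow>
        (\<exists>xstar\<in>X. (\<Sum>t=1..T. (xs t - xstar) \<bullet> cmul (cmul (F (xs t)) (A (xs t))) (W xstar)) \<ge> 0))"

text \<open>Rescaled optimistic gradient descent. rogd X F A eta x0 t = (x^(t), xhat^(t+1)),
  started from x^(0) = xhat^(1) = x0.\<close>
primrec rogd :: "(real^'k) set \<Rightarrow> (real^'k \<Rightarrow> real^'k) \<Rightarrow> (real^'k \<Rightarrow> real^'k) \<Rightarrow> real
    \<Rightarrow> real^'k \<Rightarrow> nat \<Rightarrow> (real^'k) \<times> (real^'k)" where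
  "rogd X F A eta x0 0 = (x0, x0)"
| "rogd X F A eta x0 (Suc t) =
     (let xp = fst (rogd X F A eta x0 t); xh = snd (rogd X F A eta x0 t);
          xn = proj X (xh - eta *\<^sub>R cmul (A xp) (F xp))
      in (xn, proj X (xh - eta *\<^sub>R cmul (A xn) (F xn))))"

definition rogd_x :: "(real^'k) set \<Rightarrow> (real^'k \<Rightarrow> real^'k) \<Rightarrow> (real^'k \<Rightarrow> real^'k) \<Rightarrow> real
    \<Rightarrow> real^'k \<Rightarrow> nat \<Rightarrow> real^'k" where
  "rogd_x X F A eta x0 t = fst (rogd X F A eta x0 t)"

definition player_smooth :: "('k \<Rightarrow> 'p) \<Rightarrow> ('p \<Rightarrow> (real^'k) set) \<Rightarrow> (real^'k) set
    \<Rightarrow> ('p \<Rightarrow> real^'k \<Rightarrow> real) \<Rightarrow> real \<Rightarrow> bool" where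
  "player_smooth pl Xs X u L \<longleftrightarrow>
     (\<forall>i. \<forall>x\<in>X. \<forall>y\<in>Xs i. \<forall>z\<in>Xs i.
        norm (restr pl i (grad (u i) (upd pl i x y)) - restr pl i (grad (u i) (upd pl i x z)))
          \<le> L * norm (y - z))"

definition grad_dominant :: "('k \<Rightarrow> 'p) \<Rightarrow> ('p \<Rightarrow> (real^'k) set) \<Rightarrow> (real^'k) set
    \<Rightarrow> ('p \<Rightarrow> real^'k \<Rightarrow> real) \<Rightarrow> real \<Rightarrow> bool" where
  "grad_dominant pl Xs X u G \<longleftrightarrow>
     (\<forall>i. \<forall>x\<in>X.
        u i x - (SUP y\<in>Xs i. u i (upd pl i x y))
          \<ge> G * (INF y\<in>Xs i. (restr pl i x - y) \<bullet> restr pl i (grad (u i) x)))"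

end

theory Submission
  imports Defs
begin

lemma restr_nth[simp]: "restr g c x $ k = (if g k = c then x $ k else 0)"
  by (simp add: restr_def)
lemma upd_nth[simp]: "upd g c x y $ k = (if g k = c then y $ k else x $ k)"
  by (simp add: upd_def)
lemma cmul_nth[simp]: "cmul v w $ k = v $ k * w $ k"
  by (simp add: cmul_def)
lemma blockvec_nth[simp]: "blockvec blk a x $ k = a (blk k) x"
  by (simp add: blockvec_def)

lemma linear_restr: "linear (restr g c)"
  by (rule linearI) (auto simp: vec_eq_iff)

lemma sum_group:
  fixes g :: "'k::finite \<Rightarrow> 'r::finite" and f :: "'r \<Rightarrow> real"
  shows "(\<Sum>k\<in>UNIV. f (g k) * c k) = (\<Sum>r\<in>UNIV. f r * (\<Sum>k\<in>UNIV. if g k = r then c k else 0))"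
proof -
  have "(\<Sum>r\<in>UNIV. f r * (\<Sum>k\<in>UNIV. if g k = r then c k else 0)) = (\<Sum>r\<in>UNIV. \<Sum>k\<in>UNIV. if g k = r then f r * c k else 0)"
    by (simp add: sum_distrib_left if_distrib cong: if_cong)
  also have "\<dots> = (\<Sum>k\<in>UNIV. \<Sum>r\<in>UNIV. if g k = r then f r * c k else 0)"
    by (rule sum.swap)
  also have "\<dots> = (\<Sum>k\<in>UNIV. f (g k) * c k)"
    by (simp add: eq_commute[of "g _"])
  finally show ?thesis by simp
qed

lemma prod_set_alt: "prod_set g S = (\<Inter>c. restr g c -` S c)"
  by (auto simp: prod_set_def)

lemma prod_set_closed: "(\<And>c. closed (S c)) \<Longrightarrow> closed (prod_set g S)"
  unfolding prod_set_alt
  by (intro closed_INT ballI continuous_closed_vimage linear_continuous_at) (auto simp: linear_restr linear_conv_bounded_linear[symmetric])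

lemma prod_set_convex: "(\<And>c. convex (S c)) \<Longrightarrow> convex (prod_set g S)"
  unfolding prod_set_alt
  by (intro convex_INT convex_linear_vimage linear_restr) auto

lemma supported_restr: "v \<in> supported_on g c \<Longrightarrow> restr g c v = v"
  by (auto simp: supported_on_def vec_eq_iff)

lemma prod_set_nonempty:
  assumes "\<And>c. S c \<noteq> {}" "\<And>c. S c \<subseteq> supported_on g c"
  shows "prod_set g S \<noteq> {}"
proof -
  have "\<forall>c. \<exists>v. v \<in> S c" using assms(1) by (meson ex_in_conv)
  then obtain y where y: "\<And>c. y c \<in> S c" by metis
  define x where "x = (\<chi> k. y (g k) $ k)"
  have "restr g c x = y c" for c
    using assms(2)[of c] y[of c] by (auto simp: x_def vec_eq_iff supported_on_def)
  then have "x \<in> prod_set g S" using y by (simp add: prod_set_def)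
  then show ?thesis by auto
qed

lemma prod_set_bounded:
  fixes g :: "'k::finite \<Rightarrow> 'c"
  assumes "\<And>c. bounded (S c)"
  shows "bounded (prod_set g S)"
proof -
  have "\<forall>c. \<exists>b. \<forall>v\<in>S c. norm v \<le> b" using assms by (meson bounded_iff)
  then obtain B where B: "\<And>c v. v \<in> S c \<Longrightarrow> norm v \<le> B c" by metis
  have "norm x \<le> (\<Sum>k\<in>UNIV. B (g k))" if "x \<in> prod_set g S" for x
  proof -
    have "\<bar>x $ k\<bar> \<le> B (g k)" for k
    proof -
      have "x $ k = restr g (g k) x $ k" by simp
      also have "\<bar>\<dots>\<bar> \<le> norm (restr g (g k) x)" by (rule component_le_norm_cart)
      also have "\<dots> \<le> B (g k)" using B that by (auto simp: prod_set_def)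
      finally show ?thesis .
    qed
    then show ?thesis using norm_le_l1_cart[of x] by (meson order_trans sum_mono)
  qed
  then show ?thesis by (meson bounded_iff)
qed

lemma inner_sum_cart: "u \<bullet> (v::real^'k::finite) = (\<Sum>k\<in>UNIV. u $ k * v $ k)"
  by (simp add: inner_vec_def)

lemma norm_sq_sum: "(norm (v::real^'k::finite))^2 = (\<Sum>k\<in>UNIV. (v $ k)^2)"
  unfolding power2_norm_eq_inner inner_sum_cart by (simp add: power2_eq_square)

definition wn :: "real^'k \<Rightarrow> real^'k \<Rightarrow> real" where
  "wn om v = (\<Sum>k\<in>UNIV. om $ k * (v $ k)^2)"
definition wip :: "real^'k \<Rightarrow> real^'k \<Rightarrow> real^'k \<Rightarrow> real" where
  "wip om u v = (\<Sum>k\<in>UNIV. om $ k * u $ k * v $ k)"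

lemma wn_bounds:
  fixes om v :: "real^'k::finite"
  assumes "\<And>k. l \<le> om $ k" "\<And>k. om $ k \<le> h"
  shows "l * (norm v)^2 \<le> wn om v" "wn om v \<le> h * (norm v)^2"
proof -
  show "l * (norm v)^2 \<le> wn om v"
    unfolding norm_sq_sum wn_def sum_distrib_left
    by (rule sum_mono) (simp add: assms mult_right_mono)
  show "wn om v \<le> h * (norm v)^2"
    unfolding norm_sq_sum wn_def sum_distrib_left
    by (rule sum_mono) (simp add: assms mult_right_mono)
qed

lemma wn_nonneg: "(\<And>k. 0 \<le> om $ k) \<Longrightarrow> 0 \<le> wn om v"
  unfolding wn_def by (intro sum_nonneg) simp

lemma wn_minus_commute: "wn om (a - b) = wn om (b - a)"
  unfolding wn_def by (simp add: power2_commute)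

lemma step_ineq:
  fixes a b c y g0 g1 om :: "real^'k::finite"
  assumes VIb: "wip om (a - eta *\<^sub>R g0 - b) (c - b) \<le> 0"
    and VIc: "wip om (a - eta *\<^sub>R g1 - c) (y - c) \<le> 0"
  shows "eta * wip om g1 (b - y) \<le> wn om (a - y) / 2 - wn om (c - y) / 2 - wn om (b - a) / 2
     - wn om (c - b) / 2 + eta * wip om (g1 - g0) (b - c)"
proof -
  have "eta * wip om g1 (b - y) = (\<Sum>k\<in>UNIV. om $ k * ((a$k - y$k)^2 / 2 - (c$k - y$k)^2/2
     - (b$k-a$k)^2/2 - (c$k-b$k)^2/2 + eta * (g1$k - g0$k) * (b$k - c$k)))
     + wip om (a - eta *\<^sub>R g0 - b) (c - b) + wip om (a - eta *\<^sub>R g1 - c) (y - c)"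
    unfolding wip_def sum_distrib_left sum.distrib[symmetric]
    by (rule sum.cong) (simp_all add: power2_eq_square field_simps)
  also have "\<dots> \<le> (\<Sum>k\<in>UNIV. om $ k * ((a$k - y$k)^2 / 2 - (c$k - y$k)^2/2
     - (b$k-a$k)^2/2 - (c$k-b$k)^2/2 + eta * (g1$k - g0$k) * (b$k - c$k)))"
    using VIb VIc by linarith
  also have "\<dots> = wn om (a - y) / 2 - wn om (c - y) / 2 - wn om (b - a) / 2
     - wn om (c - b) / 2 + eta * wip om (g1 - g0) (b - c)"
    unfolding wip_def wn_def sum_distrib_left sum_divide_distrib sum_subtractf[symmetric] sum.distrib[symmetric]
    by (rule sum.cong) (simp_all add: algebra_simps)
  finally show ?thesis .
qed

lemma young_w:
  fixes om d e :: "real^'k::finite"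
  assumes "\<And>k. 0 \<le> om $ k"
  shows "eta * wip om d e \<le> wn om e / 4 + eta^2 * wn om d"
proof -
  have "eta * wip om d e = (\<Sum>k\<in>UNIV. om $ k * (eta * d $ k * e $ k))"
    unfolding wip_def sum_distrib_left by (rule sum.cong) (simp_all add: algebra_simps)
  also have "\<dots> \<le> (\<Sum>k\<in>UNIV. om $ k * ((e $ k)^2 / 4 + eta^2 * (d $ k)^2))"
  proof (rule sum_mono)
    fix k
    have "eta * d $ k * e $ k \<le> (e $ k)^2 / 4 + eta^2 * (d $ k)^2"
      using sum_squares_ge_zero[of "e$k/2 - eta * d$k" 0]
      by (simp add: power2_eq_square algebra_simps)
    then show "om $ k * (eta * d $ k * e $ k) \<le> om $ k * ((e $ k)^2 / 4 + eta^2 * (d $ k)^2)"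
      using assms by (simp add: mult_left_mono)
  qed
  also have "\<dots> = wn om e / 4 + eta^2 * wn om d"
    unfolding wn_def sum_distrib_left sum_divide_distrib sum.distrib[symmetric]
    by (rule sum.cong) (simp_all add: algebra_simps)
  finally show ?thesis .
qed

lemma upd_restr_self: "upd g c x (restr g c x) = x"
  by (simp add: vec_eq_iff)

lemma restr_upd: "restr g c' (upd g c p y) = (if c' = c then restr g c y else restr g c' p)"
  by (auto simp: vec_eq_iff)

lemma upd_in_prod_set:
  assumes "p \<in> prod_set g S" "y \<in> prod_set g S"
  shows "upd g c p y \<in> prod_set g S"
  using assms by (auto simp: prod_set_def restr_upd)

lemma proj_wvi:
  fixes blk :: "'k::finite \<Rightarrow> 'r::finite"
  assumes XZ: "X = prod_set blk Zs" and cX: "convex X" and clX: "closed X" and y: "y \<in> X"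
    and wr: "\<And>r k. blk k = r \<Longrightarrow> 0 \<le> wr r"
  shows "wip (\<chi> k. wr (blk k)) (z - proj X z) (y - proj X z) \<le> 0"
proof -
  let ?p = "proj X z"
  have p: "?p \<in> X" using y clX by (auto simp: proj_def intro: closest_point_in_set)
  define S where "S r = (\<Sum>k\<in>UNIV. if blk k = r then (z - ?p) $ k * (y - ?p) $ k else 0)" for r
  have S: "S r \<le> 0" for r
  proof -
    have yr: "upd blk r ?p y \<in> X" using upd_in_prod_set p y XZ by metis
    have "(z - ?p) \<bullet> (upd blk r ?p y - ?p) \<le> 0"
      using closest_point_dot[OF cX clX yr] by (simp add: proj_def)
    also have "(z - ?p) \<bullet> (upd blk r ?p y - ?p) = S r"
      unfolding inner_sum_cart S_def by (rule sum.cong) auto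
    finally show ?thesis .
  qed
  have "wip (\<chi> k. wr (blk k)) (z - ?p) (y - ?p) = (\<Sum>k\<in>UNIV. wr (blk k) * ((z - ?p) $ k * (y - ?p) $ k))"
    unfolding wip_def by (simp add: mult.assoc)
  also have "\<dots> = (\<Sum>r\<in>UNIV. wr r * S r)"
    unfolding S_def by (rule sum_group)
  also have "\<dots> \<le> 0"
  proof (rule sum_nonpos)
    fix r
    show "wr r * S r \<le> 0"
    proof (cases "\<exists>k. blk k = r")
      case True
      then show ?thesis using wr S by (metis mult_nonneg_nonpos)
    next
      case False
      then have "S r = 0" unfolding S_def by auto
      then show ?thesis by simp
    qed
  qed
  finally show ?thesis .
qed

lemma grad_apply:
  fixes f :: "real^'k::finite \<Rightarrow> real"
  assumes "f differentiable (at z)"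
  shows "frechet_derivative f (at z) v = grad f z \<bullet> v"
proof -
  let ?D = "frechet_derivative f (at z)"
  have lin: "linear ?D" using assms by (rule linear_frechet_derivative)
  have "v = (\<Sum>i\<in>UNIV. v $ i *\<^sub>R axis i 1)"
    using basis_expansion[of v] by (simp add: scalar_mult_eq_scaleR)
  then have "?D v = ?D (\<Sum>i\<in>UNIV. v $ i *\<^sub>R axis i 1)" by simp
  also have "\<dots> = (\<Sum>i\<in>UNIV. v $ i * ?D (axis i 1))"
    by (simp add: linear_sum[OF lin] linear_cmul[OF lin])
  also have "\<dots> = grad f z \<bullet> v"
    by (simp add: inner_sum_cart grad_def mult.commute)
  finally show ?thesis .
qed

lemma has_deriv_line:
  fixes f :: "real^'k::finite \<Rightarrow> real"
  assumes "f differentiable (at (x + s *\<^sub>R v))"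
  shows "((\<lambda>t. f (x + t *\<^sub>R v)) has_real_derivative (grad f (x + s *\<^sub>R v) \<bullet> v)) (at s)"
proof -
  let ?D = "frechet_derivative f (at (x + s *\<^sub>R v))"
  have fd: "(f has_derivative ?D) (at (x + s *\<^sub>R v))"
    using assms frechet_derivative_works by blast
  have ld: "((\<lambda>t. x + t *\<^sub>R v) has_derivative (\<lambda>t. t *\<^sub>R v)) (at s)"
    by (auto intro!: derivative_eq_intros)
  have "((\<lambda>t. f (x + t *\<^sub>R v)) has_derivative (\<lambda>t. ?D (t *\<^sub>R v))) (at s)"
    using has_derivative_compose[OF ld fd] by (simp add: o_def)
  moreover have "(\<lambda>t. ?D (t *\<^sub>R v)) = (*) (grad f (x + s *\<^sub>R v) \<bullet> v)"
    using linear_frechet_derivative[OF assms] grad_apply[OF assms]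
    by (auto simp: fun_eq_iff linear_cmul)
  ultimately show ?thesis by (simp add: has_field_derivative_def)
qed

lemma descent:
  fixes f :: "real^'k::finite \<Rightarrow> real"
  assumes diff: "\<And>s. 0 \<le> s \<Longrightarrow> s \<le> 1 \<Longrightarrow> f differentiable (at (x + s *\<^sub>R v))"
    and lip: "\<And>s. 0 \<le> s \<Longrightarrow> s \<le> 1 \<Longrightarrow> (grad f (x + s *\<^sub>R v) - grad f x) \<bullet> v \<le> Lc * s * (norm v)^2"
  shows "f (x + v) \<le> f x + grad f x \<bullet> v + Lc / 2 * (norm v)^2"
proof -
  define psi where "psi t = f (x + t *\<^sub>R v) - t * (grad f x \<bullet> v) - Lc / 2 * t^2 * (norm v)^2" for t
  have "psi 0 \<ge> psi 1"
  proof (rule DERIV_nonpos_imp_nonincreasing[of 0 1])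
    fix s :: real assume s: "0 \<le> s" "s \<le> 1"
    have "(psi has_real_derivative (grad f (x + s *\<^sub>R v) \<bullet> v - grad f x \<bullet> v - Lc * s * (norm v)^2)) (at s)"
      unfolding psi_def
      by (intro derivative_eq_intros has_deriv_line[OF diff[OF s]]) (auto simp: power2_eq_square has_deriv_line[OF diff[OF s]])
    moreover have "grad f (x + s *\<^sub>R v) \<bullet> v - grad f x \<bullet> v - Lc * s * (norm v)^2 \<le> 0"
      using lip[OF s] by (simp add: inner_diff_left)
    ultimately show "\<exists>y. (psi has_real_derivative y) (at s) \<and> y \<le> 0" by blast
  qed simp
  then show ?thesis unfolding psi_def by simp
qed

lemma norm_restr_sq: "(norm (restr g c (v::real^'k::finite)))^2 = (\<Sum>k\<in>UNIV. if g k = c then (v $ k)^2 else 0)"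
  unfolding norm_sq_sum by (rule sum.cong) simp_all

lemma norm_restr_le: "norm (restr g c (v::real^'k::finite)) \<le> norm v"
proof -
  have "(norm (restr g c v))^2 \<le> (norm v)^2"
    unfolding norm_restr_sq norm_sq_sum by (rule sum_mono) auto
  then show ?thesis by (rule power2_le_imp_le) simp
qed

lemma dg_bound:
  fixes F :: "real^'k::finite \<Rightarrow> real^'k" and blk :: "'k \<Rightarrow> 'r::finite"
  assumes x: "x \<in> X" and y: "y \<in> X"
    and Flip: "norm (F x - F y) \<le> L * norm (x - y)"
    and alip: "\<And>r. \<bar>a r x - a r y\<bar> \<le> alpha * norm (x - y)"
    and Ab: "\<And>k. l \<le> a (blk k) x \<and> a (blk k) x \<le> h" and lpos: "0 < l"
    and B: "\<And>r. norm (restr blk r (F y)) \<le> B"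
  shows "(norm (cmul (blockvec blk a x) (F x) - cmul (blockvec blk a y) (F y)))^2
     \<le> 2 * (h^2 * L^2 + real CARD('r) * alpha^2 * B^2) * (norm (x - y))^2"
proof -
  let ?n = "norm (x - y)"
  have L0: "0 \<le> L * ?n" using Flip norm_ge_zero order_trans by blast
  have "(norm (cmul (blockvec blk a x) (F x) - cmul (blockvec blk a y) (F y)))^2
     = (\<Sum>k\<in>UNIV. (a (blk k) x * (F x - F y) $ k + (a (blk k) x - a (blk k) y) * F y $ k)^2)"
    unfolding norm_sq_sum by (rule sum.cong) (simp_all add: algebra_simps)
  also have "\<dots> \<le> (\<Sum>k\<in>UNIV. 2 * h^2 * ((F x - F y) $ k)^2 + 2 * (alpha * ?n)^2 * (F y $ k)^2)"
  proof (rule sum_mono)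
    fix k
    let ?p = "a (blk k) x * (F x - F y) $ k" and ?q = "(a (blk k) x - a (blk k) y) * F y $ k"
    have pq: "(?p + ?q)^2 \<le> 2 * ?p^2 + 2 * ?q^2"
      using sum_squares_ge_zero[of "?p - ?q" 0] by (simp add: power2_eq_square algebra_simps)
    have "(a (blk k) x)^2 \<le> h^2" using Ab[of k] lpos by (intro power_mono) auto
    then have p: "?p^2 \<le> h^2 * ((F x - F y) $ k)^2"
      by (simp add: power_mult_distrib mult_right_mono)
    have "\<bar>a (blk k) x - a (blk k) y\<bar> \<le> alpha * ?n" by (rule alip)
    then have "(a (blk k) x - a (blk k) y)^2 \<le> (alpha * ?n)^2"
      by (metis abs_ge_zero power2_abs power_mono)
    then have q: "?q^2 \<le> (alpha * ?n)^2 * (F y $ k)^2"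
      by (simp add: power_mult_distrib mult_right_mono)
    show "(?p + ?q)^2 \<le> 2 * h^2 * ((F x - F y) $ k)^2 + 2 * (alpha * ?n)^2 * (F y $ k)^2"
      using pq p q by linarith
  qed
  also have "\<dots> = 2 * h^2 * (norm (F x - F y))^2 + 2 * (alpha * ?n)^2 * (norm (F y))^2"
    unfolding norm_sq_sum sum.distrib sum_distrib_left by (simp add: mult.assoc)
  also have "\<dots> \<le> 2 * h^2 * (L * ?n)^2 + 2 * (alpha * ?n)^2 * (real CARD('r) * B^2)"
  proof -
    have "(norm (F x - F y))^2 \<le> (L * ?n)^2" using Flip by (intro power_mono) auto
    moreover have "(norm (F y))^2 \<le> real CARD('r) * B^2"
    proof -
      have "(norm (F y))^2 = (\<Sum>k\<in>UNIV. (\<lambda>_. 1::real) (blk k) * (F y $ k)^2)"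
        unfolding norm_sq_sum by simp
      also have "\<dots> = (\<Sum>r\<in>UNIV. 1 * (\<Sum>k\<in>UNIV. if blk k = r then (F y $ k)^2 else 0))"
        by (rule sum_group)
      also have "\<dots> = (\<Sum>r\<in>UNIV. (norm (restr blk r (F y)))^2)"
        by (simp add: norm_restr_sq)
      also have "\<dots> \<le> (\<Sum>r\<in>(UNIV::'r set). B^2)"
        by (rule sum_mono) (meson B norm_ge_zero power_mono)
      finally show ?thesis by simp
    qed
    ultimately show ?thesis
      by (intro add_mono mult_left_mono) auto
  qed
  also have "\<dots> = 2 * (h^2 * L^2 + real CARD('r) * alpha^2 * B^2) * ?n^2"
    by (simp add: algebra_simps power_mult_distrib)
  finally show ?thesis .
qed

lemma upd_player_in:
  assumes "X = prod_set pl Xs" "Xs i \<subseteq> supported_on pl i" "x \<in> X" "y \<in> Xs i"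
  shows "upd pl i x y \<in> X"
  using assms supported_restr[of y pl i] by (auto simp: prod_set_def restr_upd)

lemma upd_minus: "y \<in> supported_on g c \<Longrightarrow> upd g c x y - x = y - restr g c x"
  by (auto simp: vec_eq_iff supported_on_def)

lemma gameop_inner:
  assumes "y \<in> supported_on pl i"
  shows "game_op pl u x \<bullet> (x - upd pl i x y) = grad (u i) x \<bullet> (y - restr pl i x)"
  unfolding inner_sum_cart using assms
  by (intro sum.cong) (auto simp: game_op_def supported_on_def algebra_simps)

lemma block_decomp:
  fixes blk :: "'k::finite \<Rightarrow> 'r::finite"
  assumes XZ: "X = prod_set blk Zs" and x: "x \<in> X" and y: "y \<in> X" and S: "0 \<le> S" and l: "0 < l"
    and stat: "\<And>z. z \<in> X \<Longrightarrow> cmul (blockvec blk a x) Fx \<bullet> (x - z) \<le> S"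
    and Ab: "\<And>k. l \<le> a (blk k) x"
  shows "Fx \<bullet> (x - y) \<le> real CARD('r) * S / l"
proof -
  define c where "c r = (\<Sum>k\<in>UNIV. if blk k = r then Fx $ k * (x - y) $ k else 0)" for r
  have cr: "c r \<le> S / l" for r
  proof (cases "\<exists>k. blk k = r")
    case True
    then obtain k0 where k0: "blk k0 = r" by blast
    have z: "upd blk r x y \<in> X" using upd_in_prod_set x y XZ by metis
    have "cmul (blockvec blk a x) Fx \<bullet> (x - upd blk r x y) = a r x * c r"
      unfolding inner_sum_cart c_def sum_distrib_left by (rule sum.cong) auto
    then have le: "a r x * c r \<le> S" using stat[OF z] by simp
    have ar: "l \<le> a r x" using Ab[of k0] k0 by simp
    show ?thesis
    proof (cases "c r \<le> 0")
      case True
      then show ?thesis using S l by (meson divide_nonneg_pos order_trans)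
    next
      case False
      then have "l * c r \<le> a r x * c r" using ar by (intro mult_right_mono) auto
      then have "l * c r \<le> S" using le by linarith
      then show ?thesis using l by (simp add: field_simps mult.commute)
    qed
  next
    case False
    then have "c r = 0" unfolding c_def by auto
    then show ?thesis using S l by simp
  qed
  have "Fx \<bullet> (x - y) = (\<Sum>k\<in>UNIV. (\<lambda>_. 1::real) (blk k) * (Fx $ k * (x - y) $ k))"
    unfolding inner_sum_cart by simp
  also have "\<dots> = (\<Sum>r\<in>UNIV. 1 * c r)" unfolding c_def by (rule sum_group)
  also have "\<dots> \<le> (\<Sum>r\<in>(UNIV::'r set). S / l)" using cr by (intro sum_mono) simp
  finally show ?thesis by simp
qed

theorem corollary1:
  fixes pl :: "'k::finite \<Rightarrow> 'p"
    and blk :: "'k \<Rightarrow> 'r::finite"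
    and Xs :: "'p \<Rightarrow> (real^'k) set"
    and Zs :: "'r \<Rightarrow> (real^'k) set"
    and X :: "(real^'k) set"
    and u :: "'p \<Rightarrow> real^'k \<Rightarrow> real"
    and a w :: "'r \<Rightarrow> real^'k \<Rightarrow> real"
    and L alpha l h eta :: real
  assumes X_prod: "X = prod_set pl Xs"
    and Xs_supp: "\<forall>i. Xs i \<subseteq> supported_on pl i"
    and Xs_ne: "\<forall>i. Xs i \<noteq> {}"
    and Xs_convex: "\<forall>i. convex (Xs i)"
    and Xs_compact: "\<forall>i. compact (Xs i)"
    and X_prodZ: "X = prod_set blk Zs"
    and Zs_supp: "\<forall>r. Zs r \<subseteq> supported_on blk r"
    and u_diff: "\<forall>i. \<forall>x\<in>X. u i differentiable (at x)"
    and L_pos: "L > 0"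
    and F_lip: "\<forall>x\<in>X. \<forall>y\<in>X. norm (game_op pl u x - game_op pl u y) \<le> L * norm (x - y)"
    and a_lip: "\<forall>r. \<forall>x\<in>X. \<forall>y\<in>X. \<bar>a r x - a r y\<bar> \<le> alpha * norm (x - y)"
    and l_pos: "0 < l"
    and A_bounds: "\<forall>x\<in>X. \<forall>k. l \<le> blockvec blk a x $ k \<and> blockvec blk a x $ k \<le> h"
    and W_bounds: "\<forall>x\<in>X. \<forall>k. l \<le> blockvec blk w x $ k \<and> blockvec blk w x $ k \<le> h"
    and minty: "avg_minty X (game_op pl u) (blockvec blk a) (blockvec blk w)"
    and eta_pos: "eta > 0"
    and eta_le: "eta \<le> 1/4 * sqrt (l / (h^3 * L^2
                   + h * (BF blk X (game_op pl u))^2 * alpha^2 * real CARD('r)))"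
  shows "\<exists>C>0. \<forall>x0\<in>X. \<forall>\<epsilon>>0. \<forall>T::nat. real T \<ge> C / \<epsilon>^2 \<longrightarrow>
           (\<exists>t\<in>{1..T}.
              let x = rogd_x X (game_op pl u) (blockvec blk a) eta x0 t in
              x \<in> X \<and>
              (player_smooth pl Xs X u L \<longrightarrow>
                 (\<forall>i. \<forall>y\<in>Xs i. \<forall>\<delta>. norm (y - restr pl i x) \<le> \<delta> \<longrightarrow>
                    u i x - u i (upd pl i x y) \<ge> - \<epsilon> - L / 2 * \<delta>^2)) \<and>
              ((\<exists>G>0. grad_dominant pl Xs X u G) \<longrightarrow>
                 (\<forall>i. \<forall>y\<in>Xs i. u i x - u i (upd pl i x y) \<ge> - \<epsilon>)))"
proof -
  define F where "F = game_op pl u"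
  define A where "A = blockvec blk a"
  define Wv where "Wv = blockvec blk w"
  have clX: "closed X" unfolding X_prod
    using Xs_compact by (intro prod_set_closed) (auto intro: compact_imp_closed)
  have cvX: "convex X" unfolding X_prod using Xs_convex by (intro prod_set_convex) auto
  have neX: "X \<noteq> {}" unfolding X_prod using Xs_ne Xs_supp by (intro prod_set_nonempty) auto
  have bX: "bounded X" unfolding X_prod using Xs_compact by (intro prod_set_bounded) (auto intro: compact_imp_bounded)
  obtain b where b: "b > 0" "\<And>x. x \<in> X \<Longrightarrow> norm x \<le> b" using bX by (meson bounded_pos)
  define D where "D = 2 * b"
  have Dpos: "D > 0" using b by (simp add: D_def)
  have Dd: "norm (x - y) \<le> D" if "x \<in> X" "y \<in> X" for x y
    using norm_triangle_ineq4[of x y] b(2)[OF that(1)] b(2)[OF that(2)] by (simp add: D_def)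
  obtain x1 where x1: "x1 \<in> X" using neX by blast
  define Fm where "Fm = norm (F x1) + L * D"
  have Fm: "norm (F x) \<le> Fm" if "x \<in> X" for x
  proof -
    have "norm (F x) \<le> norm (F x1) + norm (F x - F x1)" by (metis norm_triangle_sub)
    also have "norm (F x - F x1) \<le> L * norm (x - x1)" using F_lip that x1 by (simp add: F_def)
    also have "L * norm (x - x1) \<le> L * D" using Dd[OF that x1] L_pos by simp
    finally show ?thesis by (simp add: Fm_def)
  qed
  have hl: "l \<le> h" using A_bounds x1 by (meson order_trans)
  have hpos: "h > 0" using hl l_pos by simp
  define B where "B = BF blk X F"
  have Bb: "norm (restr blk r (F x)) \<le> B" if "x \<in> X" for x r
  proof -
    have "bdd_above {norm (restr blk r (F x)) | r x. x \<in> X}"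
    proof (rule bdd_aboveI[of _ Fm])
      fix z assume "z \<in> {norm (restr blk r (F x)) | r x. x \<in> X}"
      then obtain r' x' where "z = norm (restr blk r' (F x'))" "x' \<in> X" by blast
      then show "z \<le> Fm" using norm_restr_le[of blk r' "F x'"] Fm[of x'] by simp
    qed
    then show ?thesis unfolding B_def BF_def using that by (intro cSup_upper) auto
  qed
  define K where "K = h^3 * L^2 + h * B^2 * alpha^2 * real CARD('r)"
  have Kpos: "K > 0"
  proof -
    have "h^3 * L^2 > 0" using hpos L_pos by simp
    moreover have "h * B^2 * alpha^2 * real CARD('r) \<ge> 0" using hpos by simp
    ultimately show ?thesis unfolding K_def by linarith
  qed
  have eta2: "eta^2 * K \<le> l / 16"
  proof -
    have "eta \<le> 1/4 * sqrt (l / K)" using eta_le by (simp add: K_def F_def B_def)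
    then have "eta^2 \<le> (1/4 * sqrt (l / K))^2" using eta_pos by (intro power_mono) auto
    also have "\<dots> = 1/16 * (l / K)" using l_pos Kpos by (simp add: power_mult_distrib power_divide)
    finally show ?thesis using Kpos by (simp add: field_simps)
  qed
  define Gm where "Gm = h * Fm"
  have Gm: "norm (cmul (A x) (F x)) \<le> Gm" if "x \<in> X" for x
  proof -
    have "(norm (cmul (A x) (F x)))^2 \<le> (h * norm (F x))^2"
    proof -
      have "(norm (cmul (A x) (F x)))^2 = (\<Sum>k\<in>UNIV. (A x $ k)^2 * (F x $ k)^2)"
        unfolding norm_sq_sum by (simp add: power_mult_distrib)
      also have "\<dots> \<le> (\<Sum>k\<in>UNIV. h^2 * (F x $ k)^2)"
      proof (rule sum_mono)
        fix k
        have "(A x $ k)^2 \<le> h^2" using A_bounds that l_pos unfolding A_def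
          by (intro power_mono) (auto intro: order_trans[of 0 l])
        then show "(A x $ k)^2 * (F x $ k)^2 \<le> h^2 * (F x $ k)^2" by (simp add: mult_right_mono)
      qed
      also have "\<dots> = (h * norm (F x))^2" by (simp add: norm_sq_sum power_mult_distrib sum_distrib_left)
      finally show ?thesis .
    qed
    moreover have "0 \<le> h * norm (F x)" using hpos by simp
    ultimately have "norm (cmul (A x) (F x)) \<le> h * norm (F x)" by (rule power2_le_imp_le)
    also have "\<dots> \<le> h * Fm" using Fm[OF that] hpos by simp
    finally show ?thesis by (simp add: Gm_def)
  qed
  have Gm0: "Gm \<ge> 0" using Gm[OF x1] by (meson norm_ge_zero order_trans)
  define G0 where "G0 = (if \<exists>G>0. grad_dominant pl Xs X u G then SOME G. G > 0 \<and> grad_dominant pl Xs X u G else 1)"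
  have G0: "G0 > 0" "(\<exists>G>0. grad_dominant pl Xs X u G) \<Longrightarrow> grad_dominant pl Xs X u G0"
    unfolding G0_def by (smt (verit, best) someI_ex)+
  define M0 where "M0 = real CARD('r) / l * (2 * D / eta + Gm) * sqrt (8 * h * D^2 / l)"
  have M0: "M0 \<ge> 0" unfolding M0_def using l_pos Dpos eta_pos Gm0 hpos by simp
  define C where "C = (M0 * max 1 G0)^2 + 1"
  have Cpos: "C > 0" unfolding C_def using zero_le_power2[of "M0 * max 1 G0"] by linarith
  show ?thesis
  proof (intro exI[of _ C] conjI ballI allI impI)
    show "C > 0" by (rule Cpos)
  next
    fix x0 \<epsilon> and T :: nat
    assume x0: "x0 \<in> X" and eps: "\<epsilon> > 0" and T: "C / \<epsilon>^2 \<le> real T"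
    show "\<exists>t\<in>{1..T}. let x = rogd_x X (game_op pl u) (blockvec blk a) eta x0 t in
              x \<in> X \<and>
              (player_smooth pl Xs X u L \<longrightarrow>
                 (\<forall>i. \<forall>y\<in>Xs i. \<forall>\<delta>. norm (y - restr pl i x) \<le> \<delta> \<longrightarrow>
                    u i x - u i (upd pl i x y) \<ge> - \<epsilon> - L / 2 * \<delta>^2)) \<and>
              ((\<exists>G>0. grad_dominant pl Xs X u G) \<longrightarrow>
                 (\<forall>i. \<forall>y\<in>Xs i. u i x - u i (upd pl i x y) \<ge> - \<epsilon>))"
    proof -
      have T1: "T \<ge> 1"
      proof -
        have "C / \<epsilon>^2 > 0" using Cpos eps by simp
        then have "real T > 0" using T by linarith
        then show ?thesis by simp
      qed
      define xs where "xs t = rogd_x X F A eta x0 t" for t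
      define H where "H t = snd (rogd X F A eta x0 t)" for t
      define g where "g t = cmul (A (xs t)) (F (xs t))" for t
      have rec1: "xs (Suc t) = proj X (H t - eta *\<^sub>R g t)" for t
        by (simp add: xs_def H_def g_def rogd_x_def Let_def)
      have rec2: "H (Suc t) = proj X (H t - eta *\<^sub>R g (Suc t))" for t
        by (simp add: xs_def H_def g_def rogd_x_def Let_def)
      have xs0: "xs 0 = x0" and H0: "H 0 = x0" by (simp_all add: xs_def H_def rogd_x_def)
      have projX: "proj X z \<in> X" for z using clX neX by (simp add: proj_def closest_point_in_set)
      have xsX: "xs t \<in> X" for t by (cases t) (simp_all add: xs0 x0 rec1 projX)
      have HX: "H t \<in> X" for t by (cases t) (simp_all add: H0 x0 rec2 projX)
      have mex: "\<exists>xstar\<in>X. (\<Sum>t=1..T. (xs t - xstar) \<bullet> cmul (cmul (F (xs t)) (A (xs t))) (Wv xstar)) \<ge> 0"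
        using minty xsX unfolding avg_minty_def F_def A_def Wv_def by blast
      then obtain xstar where xstar: "xstar \<in> X"
        and mty: "(\<Sum>t=1..T. (xs t - xstar) \<bullet> cmul (cmul (F (xs t)) (A (xs t))) (Wv xstar)) \<ge> 0"
        by blast
      define om where "om = Wv xstar"
      have om: "l \<le> om $ k" "om $ k \<le> h" for k using W_bounds xstar by (auto simp: om_def Wv_def)
      have om0: "0 \<le> om $ k" for k using om(1)[of k] l_pos by linarith
      define P where "P t = (norm (xs (Suc t) - H t))^2" for t
      define R where "R t = (norm (H t - xs t))^2" for t
      define V where "V t = wn om (H t - xstar) / 2 + 3 * l / 16 * R t" for t
      define m where "m t = wip om (g t) (xs t - xstar)" for t
      have step: "eta * m (Suc t) + l / 8 * P t + l / 16 * R (Suc t) \<le> V t - V (Suc t)" for t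
      proof -
        let ?a = "H t" and ?b = "xs (Suc t)" and ?c = "H (Suc t)"
        have omw: "om = (\<chi> k. w (blk k) xstar)" by (simp add: om_def Wv_def blockvec_def)
        have wr: "\<And>k r. blk k = r \<Longrightarrow> 0 \<le> w r xstar" using om0 by (auto simp: om_def Wv_def)
        have VIb: "wip om (?a - eta *\<^sub>R g t - ?b) (?c - ?b) \<le> 0"
          unfolding rec1[of t] omw by (rule proj_wvi[OF X_prodZ cvX clX HX wr])
        have VIc: "wip om (?a - eta *\<^sub>R g (Suc t) - ?c) (xstar - ?c) \<le> 0"
          unfolding rec2[of t] omw by (rule proj_wvi[OF X_prodZ cvX clX xstar wr])
        have st: "eta * m (Suc t) \<le> wn om (?a - xstar) / 2 - wn om (?c - xstar) / 2 - wn om (?b - ?a) / 2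
            - wn om (?c - ?b) / 2 + eta * wip om (g (Suc t) - g t) (?b - ?c)"
          unfolding m_def by (rule step_ineq[OF VIb VIc])
        have yg: "eta * wip om (g (Suc t) - g t) (?b - ?c) \<le> wn om (?b - ?c) / 4 + eta^2 * wn om (g (Suc t) - g t)"
          by (rule young_w) (rule om0)
        have dg: "wn om (g (Suc t) - g t) \<le> h * (norm (g (Suc t) - g t))^2"
          by (rule wn_bounds(2)) (use om in auto)
        have dg2: "(norm (g (Suc t) - g t))^2 \<le> 2 * (h^2 * L^2 + real CARD('r) * alpha^2 * B^2) * (norm (xs (Suc t) - xs t))^2"
          unfolding g_def A_def
        proof (rule dg_bound[OF xsX xsX])
          show "norm (F (xs (Suc t)) - F (xs t)) \<le> L * norm (xs (Suc t) - xs t)"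
            using F_lip xsX by (simp add: F_def)
          show "\<bar>a r (xs (Suc t)) - a r (xs t)\<bar> \<le> alpha * norm (xs (Suc t) - xs t)" for r
            using a_lip xsX by simp
          show "l \<le> a (blk k) (xs (Suc t)) \<and> a (blk k) (xs (Suc t)) \<le> h" for k
            using A_bounds xsX by simp
          show "0 < l" by (rule l_pos)
          show "norm (restr blk r (F (xs t))) \<le> B" for r using Bb xsX by simp
        qed
        have dx: "(norm (xs (Suc t) - xs t))^2 \<le> 3 * P t + 3/2 * R t"
        proof -
          let ?p = "norm (xs (Suc t) - H t)" and ?q = "norm (H t - xs t)"
          have "xs (Suc t) - xs t = (xs (Suc t) - H t) + (H t - xs t)" by simp
          then have "norm (xs (Suc t) - xs t) \<le> ?p + ?q" by (metis norm_triangle_ineq)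
          then have "(norm (xs (Suc t) - xs t))^2 \<le> (?p + ?q)^2" by (simp add: power_mono)
          moreover have "3 * ?p^2 + 3/2 * ?q^2 - (?p + ?q)^2 = 2 * (?p - ?q/2)^2"
            by (simp add: power2_eq_square algebra_simps)
          moreover have "0 \<le> (?p - ?q/2)^2" by simp
          ultimately show ?thesis unfolding P_def R_def by linarith
        qed
        have e2: "h * (norm (g (Suc t) - g t))^2 \<le> 2 * K * (norm (xs (Suc t) - xs t))^2"
        proof -
          have "h * (norm (g (Suc t) - g t))^2 \<le> h * (2 * (h^2 * L^2 + real CARD('r) * alpha^2 * B^2) * (norm (xs (Suc t) - xs t))^2)"
            using dg2 hpos by (simp add: mult_left_mono)
          also have "\<dots> = 2 * K * (norm (xs (Suc t) - xs t))^2" by (simp add: K_def algebra_simps power3_eq_cube power2_eq_square)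
          finally show ?thesis .
        qed
        have e3: "eta^2 * wn om (g (Suc t) - g t) \<le> l / 8 * (3 * P t + 3/2 * R t)"
        proof -
          have "eta^2 * wn om (g (Suc t) - g t) \<le> eta^2 * (2 * K * (norm (xs (Suc t) - xs t))^2)"
            using dg e2 by (simp add: mult_left_mono)
          also have "\<dots> = 2 * (eta^2 * K) * (norm (xs (Suc t) - xs t))^2" by simp
          also have "\<dots> \<le> 2 * (l / 16) * (norm (xs (Suc t) - xs t))^2"
            by (rule mult_right_mono) (use eta2 in auto)
          also have "\<dots> \<le> 2 * (l / 16) * (3 * P t + 3/2 * R t)"
            using dx l_pos by (simp add: mult_left_mono)
          finally show ?thesis by simp
        qed
        have wba: "l * P t \<le> wn om (?b - ?a)" unfolding P_def by (rule wn_bounds(1)) (use om in auto)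
        have wcb: "l * R (Suc t) \<le> wn om (?c - ?b)" unfolding R_def by (rule wn_bounds(1)) (use om in auto)
        have cm: "wn om (?b - ?c) = wn om (?c - ?b)" by (rule wn_minus_commute)
        show ?thesis using st yg e3 wba wcb cm unfolding V_def by (simp add: field_simps)
      qed
      have sumV: "(\<Sum>t<T. eta * m (Suc t) + l / 8 * P t + l / 16 * R (Suc t)) \<le> V 0 - V T"
      proof -
        have "(\<Sum>t<T. eta * m (Suc t) + l / 8 * P t + l / 16 * R (Suc t)) \<le> (\<Sum>t<T. V t - V (Suc t))"
          by (rule sum_mono) (rule step)
        also have "\<dots> = V 0 - V T" by (rule sum_lessThan_telescope')
        finally show ?thesis .
      qed
      have msum: "(\<Sum>t<T. m (Suc t)) \<ge> 0"
      proof -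
        have "(\<Sum>t<T. m (Suc t)) = (\<Sum>t=Suc 0..T. m t)" by (simp add: sum.atLeast1_atMost_eq)
        also have "\<dots> = (\<Sum>t=1..T. (xs t - xstar) \<bullet> cmul (cmul (F (xs t)) (A (xs t))) (Wv xstar))"
          by (rule sum.cong) (simp_all add: m_def wip_def inner_sum_cart g_def om_def algebra_simps)
        finally show ?thesis using mty by simp
      qed
      have V0: "V 0 \<le> h * D^2 / 2"
      proof -
        have "wn om (H 0 - xstar) \<le> h * (norm (H 0 - xstar))^2" by (rule wn_bounds(2)) (use om in auto)
        also have "\<dots> \<le> h * D^2" using Dd[OF HX xstar] hpos by (simp add: power_mono)
        finally show ?thesis by (simp add: V_def R_def H0 xs0)
      qed
      have VT: "V T \<ge> 0" unfolding V_def R_def using wn_nonneg[of om, OF om0] l_pos by simp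
      have sumPR: "(\<Sum>t<T. l / 8 * P t + l / 16 * R (Suc t)) \<le> h * D^2 / 2"
      proof -
        have "(\<Sum>t<T. eta * m (Suc t) + l / 8 * P t + l / 16 * R (Suc t))
            = eta * (\<Sum>t<T. m (Suc t)) + (\<Sum>t<T. l / 8 * P t + l / 16 * R (Suc t))"
          by (simp add: sum.distrib sum_distrib_left add.assoc)
        moreover have "eta * (\<Sum>t<T. m (Suc t)) \<ge> 0" using eta_pos msum by simp
        ultimately show ?thesis using sumV V0 VT by linarith
      qed
      have "\<exists>t<T. l / 8 * P t + l / 16 * R (Suc t) \<le> h * D^2 / (2 * real T)"
      proof (rule ccontr)
        assume "\<not> (\<exists>t<T. l / 8 * P t + l / 16 * R (Suc t) \<le> h * D^2 / (2 * real T))"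
        then have lt: "h * D^2 / (2 * real T) < l / 8 * P t + l / 16 * R (Suc t)" if "t < T" for t
          using that by (meson not_le)
        have "(\<Sum>t<T. h * D^2 / (2 * real T)) < (\<Sum>t<T. l / 8 * P t + l / 16 * R (Suc t))"
        proof (rule sum_strict_mono)
          have "0 \<in> {..<T}" using T1 by simp
          then show "{..<T} \<noteq> {}" by blast
        qed (simp, metis lessThan_iff lt)
        moreover have "(\<Sum>t<T. h * D^2 / (2 * real T)) = h * D^2 / 2" using T1 by simp
        ultimately show False using sumPR by linarith
      qed
      then obtain t where t: "t < T" "l / 8 * P t + l / 16 * R (Suc t) \<le> h * D^2 / (2 * real T)"
        by blast
      let ?x = "xs (Suc t)"
      define rho where "rho = sqrt (8 * h * D^2 / (l * real T))"
      have rho0: "rho \<ge> 0" unfolding rho_def using hpos l_pos by simp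
      have Rnn: "R s \<ge> 0" for s unfolding R_def by simp
      have Pnn: "P s \<ge> 0" for s unfolding P_def by simp
      have PR: "P t + R (Suc t) \<le> rho^2"
      proof -
        have "l / 16 * (P t + R (Suc t)) \<le> l / 8 * P t + l / 16 * R (Suc t)"
          using Pnn[of t] l_pos by (simp add: field_simps)
        also have "\<dots> \<le> h * D^2 / (2 * real T)" by (rule t(2))
        finally have "l / 16 * (P t + R (Suc t)) \<le> h * D^2 / (2 * real T)" .
        then have "P t + R (Suc t) \<le> 8 * h * D^2 / (l * real T)"
          using l_pos T1 by (simp add: field_simps)
        also have "\<dots> = rho^2" unfolding rho_def using hpos l_pos by simp
        finally show ?thesis .
      qed
      have n1: "norm (?x - H t) \<le> rho"
      proof -
        have "(norm (?x - H t))^2 \<le> rho^2" using PR Rnn[of "Suc t"] unfolding P_def by linarith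
        then show ?thesis using rho0 by (rule power2_le_imp_le)
      qed
      have n2: "norm (H (Suc t) - ?x) \<le> rho"
      proof -
        have "(norm (H (Suc t) - ?x))^2 \<le> rho^2" using PR Pnn[of t] unfolding R_def by linarith
        then show ?thesis using rho0 by (rule power2_le_imp_le)
      qed
      define S where "S = (2 * D / eta + Gm) * rho"
      have S0: "S \<ge> 0" unfolding S_def using Dpos eta_pos Gm0 rho0 by simp
      have stat: "cmul (blockvec blk a ?x) (F ?x) \<bullet> (?x - y) \<le> S" if y: "y \<in> X" for y
      proof -
        have vi: "(H t - eta *\<^sub>R g (Suc t) - H (Suc t)) \<bullet> (y - H (Suc t)) \<le> 0"
          unfolding rec2[of t] proj_def by (rule closest_point_dot[OF cvX clX y])
        then have "eta * (g (Suc t) \<bullet> (H (Suc t) - y)) \<le> (H t - H (Suc t)) \<bullet> (H (Suc t) - y)"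
          by (simp add: inner_diff_left inner_diff_right algebra_simps)
        also have "\<dots> \<le> norm (H t - H (Suc t)) * norm (H (Suc t) - y)" by (rule norm_cauchy_schwarz)
        also have "\<dots> \<le> (2 * rho) * D"
        proof (rule mult_mono)
          have "H t - H (Suc t) = (H t - ?x) + (?x - H (Suc t))" by simp
          then have "norm (H t - H (Suc t)) \<le> norm (H t - ?x) + norm (?x - H (Suc t))" by (metis norm_triangle_ineq)
          also have "\<dots> \<le> 2 * rho" using n1 n2 by (simp add: norm_minus_commute)
          finally show "norm (H t - H (Suc t)) \<le> 2 * rho" .
          show "norm (H (Suc t) - y) \<le> D" by (rule Dd[OF HX y])
        qed (use rho0 in auto)
        finally have "eta * (g (Suc t) \<bullet> (H (Suc t) - y)) \<le> 2 * rho * D" by simp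
        then have a1: "g (Suc t) \<bullet> (H (Suc t) - y) \<le> 2 * D / eta * rho"
          using eta_pos by (simp add: field_simps)
        have "g (Suc t) \<bullet> (?x - H (Suc t)) \<le> norm (g (Suc t)) * norm (?x - H (Suc t))" by (rule norm_cauchy_schwarz)
        also have "\<dots> \<le> Gm * rho"
          using Gm[OF xsX[of "Suc t"]] n2 Gm0 by (intro mult_mono) (auto simp: g_def norm_minus_commute)
        finally have a2: "g (Suc t) \<bullet> (?x - H (Suc t)) \<le> Gm * rho" .
        have "g (Suc t) \<bullet> (?x - y) = g (Suc t) \<bullet> (H (Suc t) - y) + g (Suc t) \<bullet> (?x - H (Suc t))"
          by (simp add: inner_diff_right)
        then show ?thesis using a1 a2 unfolding S_def g_def A_def by (simp add: algebra_simps)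
      qed
      have gap: "F ?x \<bullet> (?x - y) \<le> real CARD('r) * S / l" if "y \<in> X" for y
        by (rule block_decomp[OF X_prodZ xsX that S0 l_pos stat]) (use A_bounds xsX in auto)
      define e1 where "e1 = real CARD('r) * S / l"
      have e10: "e1 \<ge> 0" unfolding e1_def using S0 l_pos by simp
      have e1: "e1 * max 1 G0 \<le> \<epsilon>"
      proof -
        have sT: "sqrt (real T) > 0" using T1 by simp
        have "rho = sqrt (8 * h * D^2 / l) / sqrt (real T)"
          unfolding rho_def by (simp add: real_sqrt_divide[symmetric] field_simps)
        then have e1M: "e1 = M0 / sqrt (real T)" unfolding e1_def S_def M0_def by (simp add: mult.commute mult.left_commute mult.assoc)
        have "(M0 * max 1 G0)^2 \<le> (\<epsilon> * sqrt (real T))^2"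
        proof -
          have "C \<le> \<epsilon>^2 * real T" using T eps by (simp add: field_simps)
          then show ?thesis unfolding C_def by (simp add: power_mult_distrib)
        qed
        moreover have "0 \<le> \<epsilon> * sqrt (real T)" using eps by simp
        ultimately have "M0 * max 1 G0 \<le> \<epsilon> * sqrt (real T)"
          by (rule power2_le_imp_le)
        then show ?thesis unfolding e1M using sT by (simp add: field_simps)
      qed
      have "e1 * 1 \<le> e1 * max 1 G0" by (rule mult_left_mono) (simp_all add: e10)
      then have e1e: "e1 \<le> \<epsilon>" using e1 by linarith
      have "e1 * G0 \<le> e1 * max 1 G0" by (rule mult_left_mono) (simp_all add: e10)
      then have e1G: "G0 * e1 \<le> \<epsilon>" using e1 by (simp add: mult.commute)
      have xX: "?x \<in> X" by (rule xsX)
      have gi: "grad (u i) ?x \<bullet> (y - restr pl i ?x) \<le> e1" if y: "y \<in> Xs i" for i y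
      proof -
        have ys: "y \<in> supported_on pl i" using Xs_supp y by auto
        have "grad (u i) ?x \<bullet> (y - restr pl i ?x) = F ?x \<bullet> (?x - upd pl i ?x y)"
          using gameop_inner[OF ys] by (simp add: F_def)
        also have "\<dots> \<le> e1" unfolding e1_def
          by (rule gap[OF upd_player_in[OF X_prod _ xX y]]) (use Xs_supp in auto)
        finally show ?thesis .
      qed
      have P1: "u i ?x - u i (upd pl i ?x y) \<ge> - \<epsilon> - L / 2 * \<delta>^2"
        if sm: "player_smooth pl Xs X u L" and y: "y \<in> Xs i" and dl: "norm (y - restr pl i ?x) \<le> \<delta>" for i y \<delta>
      proof -
        have ys: "y \<in> supported_on pl i" using Xs_supp y by auto
        define v where "v = y - restr pl i ?x"
        have rx: "restr pl i ?x \<in> Xs i" using xX X_prod by (simp add: prod_set_def)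
        have line: "?x + s *\<^sub>R v = upd pl i ?x (restr pl i ?x + s *\<^sub>R (y - restr pl i ?x))" for s
          using ys by (auto simp: vec_eq_iff v_def supported_on_def)
        have seg: "restr pl i ?x + s *\<^sub>R (y - restr pl i ?x) \<in> Xs i" if "0 \<le> s" "s \<le> 1" for s
        proof -
          have "(1 - s) *\<^sub>R restr pl i ?x + s *\<^sub>R y \<in> Xs i"
            using Xs_convex rx y that unfolding convex_alt by blast
          then show ?thesis by (simp add: algebra_simps)
        qed
        have inX: "?x + s *\<^sub>R v \<in> X" if "0 \<le> s" "s \<le> 1" for s
          unfolding line by (rule upd_player_in[OF X_prod _ xX seg[OF that]]) (use Xs_supp in auto)
        have desc: "u i (?x + v) \<le> u i ?x + grad (u i) ?x \<bullet> v + L / 2 * (norm v)^2"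
        proof (rule descent)
          fix s :: real assume s: "0 \<le> s" "s \<le> 1"
          show "u i differentiable (at (?x + s *\<^sub>R v))" using u_diff inX[OF s] by auto
          let ?G1 = "restr pl i (grad (u i) (?x + s *\<^sub>R v))" and ?G0 = "restr pl i (grad (u i) ?x)"
          have "(grad (u i) (?x + s *\<^sub>R v) - grad (u i) ?x) \<bullet> v = (?G1 - ?G0) \<bullet> v"
            unfolding inner_sum_cart using ys by (intro sum.cong) (auto simp: v_def supported_on_def)
          also have "\<dots> \<le> norm (?G1 - ?G0) * norm v" by (rule norm_cauchy_schwarz)
          also have "\<dots> \<le> (L * (s * norm v)) * norm v"
          proof (rule mult_right_mono)
            have "norm (?G1 - ?G0) \<le> L * norm ((restr pl i ?x + s *\<^sub>R (y - restr pl i ?x)) - restr pl i ?x)"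
              using sm[unfolded player_smooth_def, rule_format, OF xX seg[OF s] rx]
              by (simp add: line upd_restr_self)
            also have "norm ((restr pl i ?x + s *\<^sub>R (y - restr pl i ?x)) - restr pl i ?x) = s * norm v"
              using s by (simp add: v_def)
            finally show "norm (?G1 - ?G0) \<le> L * (s * norm v)" .
          qed simp
          also have "\<dots> = L * s * (norm v)^2" by (simp add: power2_eq_square)
          finally show "(grad (u i) (?x + s *\<^sub>R v) - grad (u i) ?x) \<bullet> v \<le> L * s * (norm v)^2" .
        qed
        have xv: "?x + v = upd pl i ?x y" using upd_minus[OF ys, of ?x] by (simp add: v_def algebra_simps)
        have gv: "grad (u i) ?x \<bullet> v \<le> \<epsilon>" using gi[OF y] e1e by (simp add: v_def)
        have "(norm v)^2 \<le> \<delta>^2" using dl by (simp add: v_def power_mono)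
        then have "L / 2 * (norm v)^2 \<le> L / 2 * \<delta>^2" using L_pos by simp
        then show ?thesis using desc gv unfolding xv by linarith
      qed

      have P2: "u i ?x - u i (upd pl i ?x y) \<ge> - \<epsilon>"
        if gd: "\<exists>G>0. grad_dominant pl Xs X u G" and y: "y \<in> Xs i" for i y
      proof -
        have gd0: "u i ?x - (SUP y\<in>Xs i. u i (upd pl i ?x y))
            \<ge> G0 * (INF y\<in>Xs i. (restr pl i ?x - y) \<bullet> restr pl i (grad (u i) ?x))"
          using G0(2)[OF gd] xX unfolding grad_dominant_def by blast
        have bdd: "bdd_above ((\<lambda>y. u i (upd pl i ?x y)) ` Xs i)"
        proof -
          have "continuous_on (Xs i) (\<lambda>y. u i (upd pl i ?x y))"
          proof (rule continuous_at_imp_continuous_on, intro ballI)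
            fix z assume z: "z \<in> Xs i"
            have "upd pl i ?x z \<in> X" by (rule upd_player_in[OF X_prod _ xX z]) (use Xs_supp in auto)
            then have uc: "isCont (u i) (upd pl i ?x z)"
              using u_diff differentiable_imp_continuous_within by blast
            have ue: "upd pl i ?x = (\<lambda>y. ?x - restr pl i ?x + restr pl i y)"
              by (auto simp: fun_eq_iff vec_eq_iff)
            have "isCont (restr pl i) z"
              by (rule linear_continuous_at) (simp add: linear_restr linear_conv_bounded_linear[symmetric])
            then have "isCont (upd pl i ?x) z" unfolding ue by (intro continuous_intros)
            from continuous_at_compose[of z "upd pl i ?x" "u i", OF this uc]
            show "isCont (\<lambda>y. u i (upd pl i ?x y)) z" by (simp add: o_def)
          qed
          then have "compact ((\<lambda>y. u i (upd pl i ?x y)) ` Xs i)"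
            using Xs_compact compact_continuous_image by blast
          then show ?thesis by (simp add: compact_imp_bounded bounded_imp_bdd_above)
        qed
        have le1: "u i (upd pl i ?x y) \<le> (SUP y\<in>Xs i. u i (upd pl i ?x y))"
          by (rule cSUP_upper[OF y bdd])
        have inf: "- e1 \<le> (INF y\<in>Xs i. (restr pl i ?x - y) \<bullet> restr pl i (grad (u i) ?x))"
        proof (rule cINF_greatest)
          show "Xs i \<noteq> {}" using Xs_ne by auto
          fix z assume z: "z \<in> Xs i"
          have zs: "z \<in> supported_on pl i" using Xs_supp z by auto
          have "(restr pl i ?x - z) \<bullet> restr pl i (grad (u i) ?x) = - (grad (u i) ?x \<bullet> (z - restr pl i ?x))"
            unfolding inner_sum_cart sum_negf[symmetric] using zs
            by (intro sum.cong) (auto simp: supported_on_def algebra_simps)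
          then show "- e1 \<le> (restr pl i ?x - z) \<bullet> restr pl i (grad (u i) ?x)" using gi[OF z] by simp
        qed
        have "G0 * (- e1) \<le> G0 * (INF y\<in>Xs i. (restr pl i ?x - y) \<bullet> restr pl i (grad (u i) ?x))"
          using inf G0(1) by (intro mult_left_mono) auto
        then show ?thesis using gd0 le1 e1G by linarith
      qed

      show ?thesis
      proof (rule bexI[of _ "Suc t"])
        show "Suc t \<in> {1..T}" using t by auto
        have xdef: "rogd_x X (game_op pl u) (blockvec blk a) eta x0 (Suc t) = ?x"
          by (simp add: xs_def F_def A_def)
        show "let x = rogd_x X (game_op pl u) (blockvec blk a) eta x0 (Suc t) in
              x \<in> X \<and>
              (player_smooth pl Xs X u L \<longrightarrow>
                 (\<forall>i. \<forall>y\<in>Xs i. \<forall>\<delta>. norm (y - restr pl i x) \<le> \<delta> \<longrightarrow>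
                    u i x - u i (upd pl i x y) \<ge> - \<epsilon> - L / 2 * \<delta>^2)) \<and>
              ((\<exists>G>0. grad_dominant pl Xs X u G) \<longrightarrow>
                 (\<forall>i. \<forall>y\<in>Xs i. u i x - u i (upd pl i x y) \<ge> - \<epsilon>))"
          unfolding xdef Let_def using xX P1 P2 by blast
      qed
    qed
  qed
qed

end
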